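(* Let $k,l\ge1$ with $k\ne l$, and let $r$ be an odd integer with $1\le r\le 4kl$. Then the set $\overline{\mathcal{B}}(2k,2l;r)$ contains exactly one board from each equivalence class of $\mathcal{B}(2k,2l;r)$ under $\langle H,V\rangle$.
   Context: A $2k\times 2l$ grid ($2k$ rows top to bottom, $2l$ columns left to right); $\mathcal{B}(2k,2l;r)$ is the set of boards, i.e. subsets of exactly $r$ blocked cells. $\langle H,V\rangle=\{R_0,H,V,R_{180}\}$ ($H$, $V$ reflections across the horizontal and vertical midlines, $R_{180}$ the 180-degree rotation) acts on boards; two boards are equivalent if one is mapped to the other. Quadrants: $Q_1$ = rows $1..k$, cols $1..l$; $Q_2$ = rows $1..k$, cols $l+1..2l$; $Q_3$ = rows $k+1..2k$, cols $l+1..2l$; $Q_4$ = rows $k+1..2k$, cols $1..l$; the board partition is $(\lambda_1,\lambda_2,\lambda_3,\lambda_4)$ with $\lambda_i$ the number of blocked cells in $Q_i$. $\overline{\mathcal{B}}(2k,2l;r)$ is the set of boards in $\mathcal{B}(2k,2l;r)$ whose board partition satisfies: $\lambda_1\ge\lambda_i$ for all $i>1$; if $\lambda_1=\lambda_2$ then $\lambda_3\ge\lambda_4$; if $\lambda_1=\lambda_3$ then $\lambda_2\ge\lambda_4$; if $\lambda_1=\lambda_4$ then $\lambda_2\ge\lambda_3$. *)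

theory Defs
  imports Main
begin

text \<open>Cells are pairs (row, column) with rows 1..2k (top to bottom) and columns 1..2l.\<close>

definition cells :: "nat \<Rightarrow> nat \<Rightarrow> (nat \<times> nat) set" where
  "cells k l = {1..2*k} \<times> {1..2*l}"

definition boards :: "nat \<Rightarrow> nat \<Rightarrow> nat \<Rightarrow> (nat \<times> nat) set set" where
  "boards k l r = {B. B \<subseteq> cells k l \<and> card B = r}"

definition reflH :: "nat \<Rightarrow> nat \<Rightarrow> nat \<times> nat \<Rightarrow> nat \<times> nat" where
  "reflH k l = (\<lambda>(i, j). (2*k + 1 - i, j))"

definition reflV :: "nat \<Rightarrow> nat \<Rightarrow> nat \<times> nat \<Rightarrow> nat \<times> nat" where
  "reflV k l = (\<lambda>(i, j). (i, 2*l + 1 - j))"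

definition rot180 :: "nat \<Rightarrow> nat \<Rightarrow> nat \<times> nat \<Rightarrow> nat \<times> nat" where
  "rot180 k l = (\<lambda>(i, j). (2*k + 1 - i, 2*l + 1 - j))"

definition HV_group :: "nat \<Rightarrow> nat \<Rightarrow> (nat \<times> nat \<Rightarrow> nat \<times> nat) set" where
  "HV_group k l = {id, reflH k l, reflV k l, rot180 k l}"

definition board_equiv :: "nat \<Rightarrow> nat \<Rightarrow> (nat \<times> nat) set \<Rightarrow> (nat \<times> nat) set \<Rightarrow> bool" where
  "board_equiv k l B B' \<longleftrightarrow> (\<exists>g \<in> HV_group k l. g ` B = B')"

definition lam1 :: "nat \<Rightarrow> nat \<Rightarrow> (nat \<times> nat) set \<Rightarrow> nat" where
  "lam1 k l B = card {(i, j) \<in> B. 1 \<le> i \<and> i \<le> k \<and> 1 \<le> j \<and> j \<le> l}"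
definition lam2 :: "nat \<Rightarrow> nat \<Rightarrow> (nat \<times> nat) set \<Rightarrow> nat" where
  "lam2 k l B = card {(i, j) \<in> B. 1 \<le> i \<and> i \<le> k \<and> l + 1 \<le> j \<and> j \<le> 2*l}"
definition lam3 :: "nat \<Rightarrow> nat \<Rightarrow> (nat \<times> nat) set \<Rightarrow> nat" where
  "lam3 k l B = card {(i, j) \<in> B. k + 1 \<le> i \<and> i \<le> 2*k \<and> l + 1 \<le> j \<and> j \<le> 2*l}"
definition lam4 :: "nat \<Rightarrow> nat \<Rightarrow> (nat \<times> nat) set \<Rightarrow> nat" where
  "lam4 k l B = card {(i, j) \<in> B. k + 1 \<le> i \<and> i \<le> 2*k \<and> 1 \<le> j \<and> j \<le> l}"

definition boards_bar :: "nat \<Rightarrow> nat \<Rightarrow> nat \<Rightarrow> (nat \<times> nat) set set" where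
  "boards_bar k l r = {B \<in> boards k l r.
     let a1 = lam1 k l B; a2 = lam2 k l B; a3 = lam3 k l B; a4 = lam4 k l B in
       a1 \<ge> a2 \<and> a1 \<ge> a3 \<and> a1 \<ge> a4 \<and>
       (a1 = a2 \<longrightarrow> a3 \<ge> a4) \<and>
       (a1 = a3 \<longrightarrow> a2 \<ge> a4) \<and>
       (a1 = a4 \<longrightarrow> a2 \<ge> a3)}"

end

theory Submission
  imports Defs
begin

definition QA :: "nat \<Rightarrow> nat \<Rightarrow> (nat \<times> nat) set" where "QA k l = {1..k} \<times> {1..l}"
definition QB :: "nat \<Rightarrow> nat \<Rightarrow> (nat \<times> nat) set" where "QB k l = {1..k} \<times> {l+1..2*l}"
definition QC :: "nat \<Rightarrow> nat \<Rightarrow> (nat \<times> nat) set" where "QC k l = {k+1..2*k} \<times> {l+1..2*l}"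
definition QD :: "nat \<Rightarrow> nat \<Rightarrow> (nat \<times> nat) set" where "QD k l = {k+1..2*k} \<times> {1..l}"

lemma lam1_eq: "lam1 k l B = card (B \<inter> QA k l)"
  unfolding lam1_def QA_def by (rule arg_cong[where f=card]) auto
lemma lam2_eq: "lam2 k l B = card (B \<inter> QB k l)"
  unfolding lam2_def QB_def by (rule arg_cong[where f=card]) auto
lemma lam3_eq: "lam3 k l B = card (B \<inter> QC k l)"
  unfolding lam3_def QC_def by (rule arg_cong[where f=card]) auto
lemma lam4_eq: "lam4 k l B = card (B \<inter> QD k l)"
  unfolding lam4_def QD_def by (rule arg_cong[where f=card]) auto

lemma img_card:
  assumes "inj_on g C" "B \<subseteq> C" "\<And>x. x \<in> C \<Longrightarrow> g x \<in> Q \<longleftrightarrow> x \<in> P"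
  shows "card (g ` B \<inter> Q) = card (B \<inter> P)"
proof -
  have e: "g ` B \<inter> Q = g ` (B \<inter> P)"
  proof (intro equalityI subsetI)
    fix y assume y: "y \<in> g ` B \<inter> Q"
    then have "y \<in> g ` B" by (rule IntD1)
    then obtain x where x: "x \<in> B" "y = g x" by (rule imageE) simp
    have "y \<in> Q" using y by (rule IntD2)
    then have gq: "g x \<in> Q" using x(2) by simp
    have c: "x \<in> C" using x(1) assms(2) by (rule subsetD[rotated])
    have "x \<in> P" using assms(3)[OF c] gq by (rule iffD1)
    then have "x \<in> B \<inter> P" using x(1) by (rule IntI[rotated])
    then show "y \<in> g ` (B \<inter> P)" using x(2) by (rule image_eqI[rotated])
  next
    fix y assume "y \<in> g ` (B \<inter> P)"
    then obtain x where x: "x \<in> B \<inter> P" "y = g x" by (rule imageE) simp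
    have c: "x \<in> C" using IntD1[OF x(1)] assms(2) by (rule subsetD[rotated])
    have "g x \<in> Q" using assms(3)[OF c] IntD2[OF x(1)] by (rule iffD2)
    moreover have "g x \<in> g ` B" using IntD1[OF x(1)] by (rule imageI)
    ultimately show "y \<in> g ` B \<inter> Q" using x(2) by simp
  qed
  have "inj_on g (B \<inter> P)" by (rule inj_on_subset[OF assms(1) order_trans[OF Int_lower1 assms(2)]])
  then have "card (g ` (B \<inter> P)) = card (B \<inter> P)" by (rule card_image)
  then show ?thesis unfolding e .
qed

lemma inj_H: "inj_on (reflH k l) (cells k l)"
  unfolding inj_on_def reflH_def cells_def by (clarsimp, arith)
lemma inj_V: "inj_on (reflV k l) (cells k l)"
  unfolding inj_on_def reflV_def cells_def by (clarsimp, arith)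
lemma inj_R: "inj_on (rot180 k l) (cells k l)"
  unfolding inj_on_def rot180_def cells_def by (clarsimp, arith)

lemma maps_H: "reflH k l ` cells k l \<subseteq> cells k l"
  unfolding reflH_def cells_def by auto
lemma maps_V: "reflV k l ` cells k l \<subseteq> cells k l"
  unfolding reflV_def cells_def by auto
lemma maps_R: "rot180 k l ` cells k l \<subseteq> cells k l"
  unfolding rot180_def cells_def by auto

lemma sumlam:
  assumes "B \<subseteq> cells k l"
  shows "lam1 k l B + lam2 k l B + lam3 k l B + lam4 k l B = card B"
proof -
  have fin: "finite B" using assms finite_subset unfolding cells_def by blast
  have e: "B = (B \<inter> QA k l) \<union> (B \<inter> QB k l) \<union> (B \<inter> QC k l) \<union> (B \<inter> QD k l)"
    using assms unfolding cells_def QA_def QB_def QC_def QD_def by fastforce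
  have "card ((B \<inter> QA k l) \<union> (B \<inter> QB k l) \<union> (B \<inter> QC k l) \<union> (B \<inter> QD k l))
     = card (B \<inter> QA k l) + card (B \<inter> QB k l) + card (B \<inter> QC k l) + card (B \<inter> QD k l)"
    using fin
    apply (subst card_Un_disjoint, simp, simp, fastforce simp: QA_def QB_def QC_def QD_def)
    apply (subst card_Un_disjoint, simp, simp, fastforce simp: QA_def QB_def QC_def QD_def)
    apply (subst card_Un_disjoint, simp, simp, fastforce simp: QA_def QB_def QC_def QD_def)
    by simp
  then show ?thesis using e lam1_eq lam2_eq lam3_eq lam4_eq by metis
qed

lemma lamH:
  assumes "B \<subseteq> cells k l"
  shows "lam1 k l (reflH k l ` B) = lam4 k l B" "lam2 k l (reflH k l ` B) = lam3 k l B"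
        "lam3 k l (reflH k l ` B) = lam2 k l B" "lam4 k l (reflH k l ` B) = lam1 k l B"
  unfolding lam1_eq lam2_eq lam3_eq lam4_eq
  by (rule img_card[OF inj_H assms]; auto simp: reflH_def cells_def QA_def QB_def QC_def QD_def)+

lemma lamV:
  assumes "B \<subseteq> cells k l"
  shows "lam1 k l (reflV k l ` B) = lam2 k l B" "lam2 k l (reflV k l ` B) = lam1 k l B"
        "lam3 k l (reflV k l ` B) = lam4 k l B" "lam4 k l (reflV k l ` B) = lam3 k l B"
  unfolding lam1_eq lam2_eq lam3_eq lam4_eq
  by (rule img_card[OF inj_V assms]; auto simp: reflV_def cells_def QA_def QB_def QC_def QD_def)+

lemma lamR:
  assumes "B \<subseteq> cells k l"
  shows "lam1 k l (rot180 k l ` B) = lam3 k l B" "lam2 k l (rot180 k l ` B) = lam4 k l B"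
        "lam3 k l (rot180 k l ` B) = lam1 k l B" "lam4 k l (rot180 k l ` B) = lam2 k l B"
  unfolding lam1_eq lam2_eq lam3_eq lam4_eq
  by (rule img_card[OF inj_R assms]; auto simp: rot180_def cells_def QA_def QB_def QC_def QD_def)+

definition barP :: "nat \<Rightarrow> nat \<Rightarrow> nat \<Rightarrow> nat \<Rightarrow> bool" where
  "barP a1 a2 a3 a4 \<longleftrightarrow> a1 \<ge> a2 \<and> a1 \<ge> a3 \<and> a1 \<ge> a4 \<and>
       (a1 = a2 \<longrightarrow> a3 \<ge> a4) \<and> (a1 = a3 \<longrightarrow> a2 \<ge> a4) \<and> (a1 = a4 \<longrightarrow> a2 \<ge> a3)"

lemma bar_iff: "B \<in> boards_bar k l r \<longleftrightarrow> B \<in> boards k l r \<and> barP (lam1 k l B) (lam2 k l B) (lam3 k l B) (lam4 k l B)"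
  unfolding boards_bar_def barP_def Let_def by simp

lemma nosym:
  assumes "odd (a+b+c+d::nat)"
  shows "\<not> (a = b \<and> c = d)" "\<not> (a = d \<and> b = c)" "\<not> (a = c \<and> b = d)"
  using assms by auto

lemma ex_bar:
  assumes "\<not> (a = b \<and> c = d)" "\<not> (a = d \<and> b = c)" "\<not> (a = c \<and> b = d)"
  shows "barP a b c d \<or> barP d c b a \<or> barP b a d c \<or> barP c d a b"
  using assms unfolding barP_def by (cases "a \<le> b"; cases "a \<le> c"; cases "a \<le> d"; cases "b \<le> c"; cases "b \<le> d"; cases "c \<le> d"; auto)

lemma excl:
  assumes "\<not> (a = b \<and> c = d)" "\<not> (a = d \<and> b = c)" "\<not> (a = c \<and> b = d)"
  shows "\<not> (barP a b c d \<and> barP d c b a)" "\<not> (barP a b c d \<and> barP b a d c)"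
        "\<not> (barP a b c d \<and> barP c d a b)" "\<not> (barP d c b a \<and> barP b a d c)"
        "\<not> (barP d c b a \<and> barP c d a b)" "\<not> (barP b a d c \<and> barP c d a b)"
  using assms unfolding barP_def by auto

lemma img_boards:
  assumes "B \<in> boards k l r" "inj_on g (cells k l)" "g ` cells k l \<subseteq> cells k l"
  shows "g ` B \<in> boards k l r"
  using assms unfolding boards_def
  by (metis (no_types, lifting) card_image image_mono inj_on_subset mem_Collect_eq order_trans)

theorem proposition7p2:
  fixes k l r :: nat
  assumes "k \<ge> 1" and "l \<ge> 1" and "k \<noteq> l"
    and "odd r" and "1 \<le> r" and "r \<le> 4 * k * l"
  shows "\<forall>B \<in> boards k l r. \<exists>!B'. B' \<in> boards_bar k l r \<and> board_equiv k l B B'"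
proof
  fix B assume B: "B \<in> boards k l r"
  have sub: "B \<subseteq> cells k l" and cB: "card B = r" using B unfolding boards_def by auto
  define a where "a = lam1 k l B"
  define b where "b = lam2 k l B"
  define c where "c = lam3 k l B"
  define d where "d = lam4 k l B"
  have odd: "odd (a+b+c+d)" using sumlam[OF sub] cB assms(4) a_def b_def c_def d_def by simp
  have eqv: "board_equiv k l B B' \<longleftrightarrow> B' = B \<or> B' = reflH k l ` B \<or> B' = reflV k l ` B \<or> B' = rot180 k l ` B" for B'
    unfolding board_equiv_def HV_group_def by auto
  have bI: "B \<in> boards_bar k l r \<longleftrightarrow> barP a b c d" using B bar_iff a_def b_def c_def d_def by simp
  have bH: "reflH k l ` B \<in> boards_bar k l r \<longleftrightarrow> barP d c b a"
    using bar_iff img_boards[OF B inj_H maps_H] lamH[OF sub] a_def b_def c_def d_def by simp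
  have bV: "reflV k l ` B \<in> boards_bar k l r \<longleftrightarrow> barP b a d c"
    using bar_iff img_boards[OF B inj_V maps_V] lamV[OF sub] a_def b_def c_def d_def by simp
  have bR: "rot180 k l ` B \<in> boards_bar k l r \<longleftrightarrow> barP c d a b"
    using bar_iff img_boards[OF B inj_R maps_R] lamR[OF sub] a_def b_def c_def d_def by simp
  show "\<exists>!B'. B' \<in> boards_bar k l r \<and> board_equiv k l B B'"
    using ex_bar[OF nosym[OF odd]] excl[OF nosym[OF odd]] bI bH bV bR unfolding eqv by metis
qed

end
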